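(* Let $\mu>\nu>0$ and let $(Y_i)_{i\ge0},(e_i)_{i\ge0}$ be sequences with values in $[0,1]$, with $e_0=1/2$, satisfying the decoy-state constraints (DS) for some reals $Q_\mu,Q_\nu,E_\mu,E_\nu$. Let $e_t\in(0,1/2]$ and set $a=1+\log_2(1-e_t)$, $b=\log_2(1-e_t)-\log_2 e_t$. Assume $$(a-b)\frac{\nu}{\mu+\nu}+(b-2a)\ge 0 .$$ Then, with $C_1=\mu^2e^{\nu}Q_\nu-\nu^2e^{\mu}Q_\mu$ and $C_2=\mu^2e^{\nu}E_\nu Q_\nu-\nu^2e^{\mu}E_\mu Q_\mu$, $$Y_1\big[1-h(e_1)\big]\ \ge\ \frac{1}{\mu\nu(\mu-\nu)}\Big[aC_1-bC_2+(a-b)\,\nu\big(\nu e^{\mu}E_\mu Q_\mu-\mu e^{\nu}E_\nu Q_\nu\big)\Big].$$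
   Context: $h(x)=-x\log_2 x-(1-x)\log_2(1-x)$ is the binary entropy function on $[0,1]$ (with $0\log_2 0=0$). For reals $\mu>\nu>0$, the decoy-state constraints (DS) on sequences $(Y_i)_{i\ge0},(e_i)_{i\ge0}$ with values in $[0,1]$ are $$Q_\mu=\sum_{i=0}^\infty \frac{\mu^i e^{-\mu}}{i!}Y_i,\quad Q_\nu=\sum_{i=0}^\infty \frac{\nu^i e^{-\nu}}{i!}Y_i,\quad E_\mu Q_\mu=\sum_{i=0}^\infty \frac{\mu^i e^{-\mu}}{i!}Y_ie_i,\quad E_\nu Q_\nu=\sum_{i=0}^\infty \frac{\nu^i e^{-\nu}}{i!}Y_ie_i.$$ *)

theory Defs
  imports "HOL-Analysis.Analysis"
begin

definition bin_entropy :: "real \<Rightarrow> real" where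
  "bin_entropy x =
     (if x = 0 then 0 else - x * log 2 x) +
     (if x = 1 then 0 else - (1 - x) * log 2 (1 - x))"

definition poisson_w :: "real \<Rightarrow> nat \<Rightarrow> real" where
  "poisson_w m i = m ^ i * exp (- m) / fact i"

end

theory Submission
  imports Defs
begin

lemma xlnx_bound:
  fixes x p :: real
  assumes "0 \<le> x" "0 < p"
  shows "(if x = 0 then 0 else x * ln x) \<ge> x * ln p + x - p"
proof (cases "x = 0")
  case True then show ?thesis using assms by simp
next
  case False
  hence xp: "x > 0" using assms by simp
  have "ln (p / x) \<le> p / x - 1" using ln_le_minus_one xp assms by simp
  hence "ln p - ln x \<le> p / x - 1" using ln_div xp assms by simp
  hence "x * (ln p - ln x) \<le> x * (p / x - 1)" using xp by (intro mult_left_mono) auto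
  hence "x * ln p - x * ln x \<le> p - x" using xp by (simp add: algebra_simps)
  then show ?thesis using False by simp
qed

lemma entropy_bound:
  fixes x et :: real
  assumes "0 \<le> x" "x \<le> 1" "0 < et" "et < 1"
  shows "1 - bin_entropy x \<ge> (1 + log 2 (1 - et)) - (log 2 (1 - et) - log 2 et) * x"
proof -
  have l2: "ln 2 > (0::real)" by simp
  have h1: "(if x = 0 then 0 else x * ln x) \<ge> x * ln et + x - et"
    using xlnx_bound assms by simp
  have h2: "(if 1 - x = 0 then 0 else (1-x) * ln (1-x)) \<ge> (1-x) * ln (1-et) + (1-x) - (1-et)"
    using xlnx_bound[of "1-x" "1-et"] assms by simp
  have H: "bin_entropy x * ln 2 = - (if x = 0 then 0 else x * ln x) - (if 1 - x = 0 then 0 else (1-x) * ln (1-x))"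
    unfolding bin_entropy_def log_def using l2 by (auto simp: field_simps)
  have "bin_entropy x * ln 2 \<le> - x * ln et - (1-x) * ln (1-et)"
    using H h1 h2 by linarith
  hence "bin_entropy x \<le> (- x * ln et - (1-x) * ln (1-et)) / ln 2"
    using l2 by (simp add: pos_le_divide_eq)
  moreover have "(1 + log 2 (1 - et)) - (log 2 (1 - et) - log 2 et) * x
      = 1 - (- x * ln et - (1-x) * ln (1-et)) / ln 2"
    unfolding log_def using l2 by (simp add: field_simps)
  ultimately show ?thesis by linarith
qed

theorem mainTheorem4:
  fixes \<mu> \<nu> Q\<mu> Q\<nu> E\<mu> E\<nu> et :: real
    and Y e :: "nat \<Rightarrow> real"
  assumes hmn: "\<mu> > \<nu>" and hn: "\<nu> > 0"
    and hY: "\<And>i. 0 \<le> Y i \<and> Y i \<le> 1"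
    and he: "\<And>i. 0 \<le> e i \<and> e i \<le> 1"
    and he0: "e 0 = 1/2"
    and DS1: "(\<lambda>i. poisson_w \<mu> i * Y i) sums Q\<mu>"
    and DS2: "(\<lambda>i. poisson_w \<nu> i * Y i) sums Q\<nu>"
    and DS3: "(\<lambda>i. poisson_w \<mu> i * Y i * e i) sums (E\<mu> * Q\<mu>)"
    and DS4: "(\<lambda>i. poisson_w \<nu> i * Y i * e i) sums (E\<nu> * Q\<nu>)"
    and het: "0 < et" "et \<le> 1/2"
    and hcond: "(1 + log 2 (1 - et) - (log 2 (1 - et) - log 2 et)) * (\<nu> / (\<mu> + \<nu>))
               + ((log 2 (1 - et) - log 2 et) - 2 * (1 + log 2 (1 - et))) \<ge> 0"
  shows "let a = 1 + log 2 (1 - et);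
             b = log 2 (1 - et) - log 2 et;
             C1 = \<mu>^2 * exp \<nu> * Q\<nu> - \<nu>^2 * exp \<mu> * Q\<mu>;
             C2 = \<mu>^2 * exp \<nu> * E\<nu> * Q\<nu> - \<nu>^2 * exp \<mu> * E\<mu> * Q\<mu>
         in Y 1 * (1 - bin_entropy (e 1)) \<ge>
            (a * C1 - b * C2 + (a - b) * \<nu> * (\<nu> * exp \<mu> * E\<mu> * Q\<mu> - \<mu> * exp \<nu> * E\<nu> * Q\<nu>))
              / (\<mu> * \<nu> * (\<mu> - \<nu>))"
proof -
  define a where "a = 1 + log 2 (1 - et)"
  define b where "b = log 2 (1 - et) - log 2 et"
  have ha: "a \<ge> 0"
  proof -
    have "log 2 (1/2) \<le> log 2 (1 - et)" using het by (subst log_le_cancel_iff) auto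
    moreover have "log 2 (1/2::real) = -1" by (simp add: log_divide)
    ultimately show ?thesis unfolding a_def by linarith
  qed
  have hab: "a - b \<le> 0"
  proof -
    have "log 2 et \<le> log 2 (1/2)" using het by (subst log_le_cancel_iff) auto
    moreover have "log 2 (1/2::real) = -1" by (simp add: log_divide)
    moreover have "a - b = 1 + log 2 et" unfolding a_def b_def by simp
    ultimately show ?thesis by linarith
  qed
  have hc: "(a - b) * (\<nu> / (\<mu> + \<nu>)) + (b - 2 * a) \<ge> 0" using hcond unfolding a_def b_def .
  define A where "A i = \<mu>^i / fact i * Y i" for i
  define B where "B i = \<nu>^i / fact i * Y i" for i
  define Ae where "Ae i = \<mu>^i / fact i * Y i * e i" for i
  define Be where "Be i = \<nu>^i / fact i * Y i * e i" for i
  have sA: "A sums (exp \<mu> * Q\<mu>)"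
  proof -
    have "(\<lambda>i. exp \<mu> * (poisson_w \<mu> i * Y i)) sums (exp \<mu> * Q\<mu>)" using sums_mult[OF DS1] .
    moreover have "(\<lambda>i. exp \<mu> * (poisson_w \<mu> i * Y i)) = A"
      by (rule ext) (simp add: A_def poisson_w_def exp_minus field_simps)
    ultimately show ?thesis by simp
  qed
  have sB: "B sums (exp \<nu> * Q\<nu>)"
  proof -
    have "(\<lambda>i. exp \<nu> * (poisson_w \<nu> i * Y i)) sums (exp \<nu> * Q\<nu>)" using sums_mult[OF DS2] .
    moreover have "(\<lambda>i. exp \<nu> * (poisson_w \<nu> i * Y i)) = B"
      by (rule ext) (simp add: B_def poisson_w_def exp_minus field_simps)
    ultimately show ?thesis by simp
  qed
  have sAe: "Ae sums (exp \<mu> * (E\<mu> * Q\<mu>))"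
  proof -
    have "(\<lambda>i. exp \<mu> * (poisson_w \<mu> i * Y i * e i)) sums (exp \<mu> * (E\<mu> * Q\<mu>))" using sums_mult[OF DS3] .
    moreover have "(\<lambda>i. exp \<mu> * (poisson_w \<mu> i * Y i * e i)) = Ae"
      by (rule ext) (simp add: Ae_def poisson_w_def exp_minus field_simps)
    ultimately show ?thesis by simp
  qed
  have sBe: "Be sums (exp \<nu> * (E\<nu> * Q\<nu>))"
  proof -
    have "(\<lambda>i. exp \<nu> * (poisson_w \<nu> i * Y i * e i)) sums (exp \<nu> * (E\<nu> * Q\<nu>))" using sums_mult[OF DS4] .
    moreover have "(\<lambda>i. exp \<nu> * (poisson_w \<nu> i * Y i * e i)) = Be"
      by (rule ext) (simp add: Be_def poisson_w_def exp_minus field_simps)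
    ultimately show ?thesis by simp
  qed
  define g where "g i = a * (\<mu>^2 * B i - \<nu>^2 * A i) - b * (\<mu>^2 * Be i - \<nu>^2 * Ae i)
      + (a - b) * \<nu> * (\<nu> * Ae i - \<mu> * Be i)" for i
  define N where "N = a * (\<mu>^2 * (exp \<nu> * Q\<nu>) - \<nu>^2 * (exp \<mu> * Q\<mu>))
      - b * (\<mu>^2 * (exp \<nu> * (E\<nu> * Q\<nu>)) - \<nu>^2 * (exp \<mu> * (E\<mu> * Q\<mu>)))
      + (a - b) * \<nu> * (\<nu> * (exp \<mu> * (E\<mu> * Q\<mu>)) - \<mu> * (exp \<nu> * (E\<nu> * Q\<nu>)))"
  have sg: "g sums N"
    unfolding g_def N_def
    by (intro sums_add sums_diff sums_mult sA sB sAe sBe)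
  define D where "D = \<mu> * \<nu> * (\<mu> - \<nu>)"
  have Dpos: "D > 0" unfolding D_def using hmn hn by simp
  have g1: "g 1 = D * (a - b * e 1) * Y 1"
    unfolding g_def A_def B_def Ae_def Be_def D_def by (simp add: power2_eq_square algebra_simps)
  have gle: "g i \<le> (if i = 1 then g 1 else 0)" for i
  proof -
    consider "i = 0" | "i = 1" | k where "i = k + 2" by (metis One_nat_def add_2_eq_Suc' not0_implies_Suc)
    then show ?thesis
    proof cases
      case 1
      have g0: "g 0 = Y 0 * (- ((\<mu> - \<nu>) * (\<mu> + \<nu>) / 2) * ((a - b) * (\<nu> / (\<mu> + \<nu>)) + (b - 2 * a)))"
        unfolding g_def A_def B_def Ae_def Be_def using he0 hmn hn
        by (simp add: field_simps power2_eq_square)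
      have "(\<mu> - \<nu>) * (\<mu> + \<nu>) / 2 \<ge> 0" using hmn hn by simp
      hence "- ((\<mu> - \<nu>) * (\<mu> + \<nu>) / 2) * ((a - b) * (\<nu> / (\<mu> + \<nu>)) + (b - 2 * a)) \<le> 0"
        using hc by (simp add: mult_nonneg_nonneg)
      hence "g 0 \<le> 0" unfolding g0 using hY[of 0] by (simp add: mult_nonneg_nonpos)
      then show ?thesis using 1 by simp
    next
      case 2 then show ?thesis by simp
    next
      case 3
      define x where "x = \<mu>^i / fact i"
      define y where "y = \<nu>^i / fact i"
      define P where "P = \<mu>^2 * y - \<nu>^2 * x"
      have gi: "g i = Y i * ((1 - e i) * (a * P) + e i * ((a - b) * (\<mu> * (\<mu> - \<nu>) * y)))"
        unfolding g_def A_def B_def Ae_def Be_def P_def x_def y_def by (simp add: field_simps power2_eq_square)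
      have "\<nu>^k \<le> \<mu>^k" using hmn hn by (intro power_mono) auto
      hence "(\<mu>^2 * \<nu>^2) * \<nu>^k \<le> (\<mu>^2 * \<nu>^2) * \<mu>^k"
        by (intro mult_left_mono) auto
      hence "\<mu>^2 * \<nu>^i \<le> \<nu>^2 * \<mu>^i" unfolding 3
        by (simp add: power_add power2_eq_square algebra_simps)
      hence "\<mu>^2 * \<nu>^i / fact i \<le> \<nu>^2 * \<mu>^i / fact i" by (simp add: divide_right_mono)
      hence P0: "P \<le> 0" unfolding P_def x_def y_def by simp
      have y0: "y \<ge> 0" unfolding y_def using hn by simp
      have t1: "(1 - e i) * (a * P) \<le> 0" using he[of i] ha P0
        by (simp add: mult_nonneg_nonpos)
      have "(a - b) * (\<mu> * (\<mu> - \<nu>) * y) \<le> 0" using hab hmn hn y0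
        by (simp add: mult_nonpos_nonneg)
      hence t2: "e i * ((a - b) * (\<mu> * (\<mu> - \<nu>) * y)) \<le> 0" using he[of i]
        by (simp add: mult_nonneg_nonpos)
      have "g i \<le> 0" unfolding gi using hY[of i] t1 t2 by (simp add: mult_nonneg_nonpos)
      then show ?thesis using 3 by simp
    qed
  qed
  have "N \<le> g 1"
  proof (rule sums_le[OF _ sg sums_single[of 1 g]])
    fix n show "g n \<le> (if n = 1 then g n else 0)" using gle[of n] by (cases "n = 1") auto
  qed
  also have "\<dots> = D * ((a - b * e 1) * Y 1)" using g1 by simp
  also have "\<dots> \<le> D * (Y 1 * (1 - bin_entropy (e 1)))"
  proof -
    have "a - b * e 1 \<le> 1 - bin_entropy (e 1)"
      using entropy_bound[of "e 1" et] he[of 1] het unfolding a_def b_def by (simp add: mult.commute)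
    hence "(a - b * e 1) * Y 1 \<le> Y 1 * (1 - bin_entropy (e 1))"
      using hY[of 1] by (simp add: mult.commute mult_left_mono)
    then show ?thesis using Dpos by simp
  qed
  finally have "N / D \<le> Y 1 * (1 - bin_entropy (e 1))" using Dpos by (simp add: pos_divide_le_eq mult.commute)
  moreover have "N = (a * (\<mu>^2 * exp \<nu> * Q\<nu> - \<nu>^2 * exp \<mu> * Q\<mu>)
      - b * (\<mu>^2 * exp \<nu> * E\<nu> * Q\<nu> - \<nu>^2 * exp \<mu> * E\<mu> * Q\<mu>)
      + (a - b) * \<nu> * (\<nu> * exp \<mu> * E\<mu> * Q\<mu> - \<mu> * exp \<nu> * E\<nu> * Q\<nu>))"
    unfolding N_def by (simp add: algebra_simps)
  ultimately show ?thesis unfolding Let_def a_def[symmetric] b_def[symmetric] D_def by simp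
qed

end
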